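(* Let $\phi(\beta)=\sum_{k=0}^\infty k!\,\beta^k$ as a formal power series. Then for all integers $n\ge1$ and $k\ge0$, \[ [\beta^k]\,\phi(\beta)^n\le k!\prod_{j=1}^k\Big(1+\frac{n-1}{j^2}\Big)\le 6^n\,k!. \] Equivalently, $\sum_{l_1+\dots+l_n=k,\ l_i\ge0}\prod_{i=1}^n l_i!\le k!\prod_{j=1}^k(1+(n-1)/j^2)$.
   Context: $[\beta^k]F(\beta)$ denotes the coefficient of $\beta^k$ in the formal power series $F$. *)

theory Defs
  imports "HOL-Computational_Algebra.Formal_Power_Series"
begin

definition phi_fps :: "real fps" where
  "phi_fps = Abs_fps (\<lambda>k. fact k)"

end

theory Submission imports Defs begin

unbundle fps_syntax

lemma phi_nth: "phi_fps $ k = fact k" by (simp add: phi_fps_def)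

lemma phi_eq: "phi_fps = 1 + fps_X * phi_fps + fps_X^2 * fps_deriv phi_fps"
proof (rule fps_ext)
  fix n
  show "phi_fps $ n = (1 + fps_X * phi_fps + fps_X^2 * fps_deriv phi_fps) $ n"
  proof (cases n)
    case 0 then show ?thesis by (simp add: phi_nth fps_X_power_mult_nth)
  next
    case (Suc m) note m = this
    show ?thesis
    proof (cases m)
      case 0 then show ?thesis using m by (simp add: phi_nth fps_X_power_mult_nth)
    next
      case (Suc j)
      have "fact (Suc (Suc j)) = (fact (Suc j) :: real) + real (Suc j) * fact (Suc j)"
        by (simp add: algebra_simps)
      then show ?thesis using m Suc by (simp add: phi_nth fps_X_power_mult_nth)
    qed
  qed
qed

lemma rec_a:
  "real k * (phi_fps ^ Suc n) $ k = real (Suc n) * ((phi_fps ^ Suc n) $ Suc k - (phi_fps ^ n) $ Suc k - (phi_fps ^ Suc n) $ k)"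
proof -
  let ?p = phi_fps
  have "fps_X^2 * fps_deriv (?p ^ Suc n) = fps_const (of_nat (Suc n)) * ?p ^ n * (fps_X^2 * fps_deriv ?p)"
  proof -
    have "fps_deriv (?p ^ Suc n) = fps_const (of_nat (Suc n)) * fps_deriv ?p * ?p ^ n"
      by (simp only: fps_deriv_power diff_Suc_1)
    then show ?thesis by (simp only: mult_ac)
  qed
  also have "fps_X^2 * fps_deriv ?p = ?p - 1 - fps_X * ?p"
    using phi_eq by (simp add: algebra_simps)
  finally have e: "fps_X^2 * fps_deriv (?p ^ Suc n) = fps_const (of_nat (Suc n)) * (?p ^ Suc n - ?p ^ n - fps_X * ?p ^ Suc n)"
    by (simp add: algebra_simps)
  have l: "(fps_X^2 * fps_deriv (?p ^ Suc n)) $ Suc k = real k * (?p ^ Suc n) $ k"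
    by (cases k) (simp_all only: fps_X_power_mult_nth fps_deriv_nth, simp_all)
  have r: "(fps_const (of_nat (Suc n)) * (?p ^ Suc n - ?p ^ n - fps_X * ?p ^ Suc n)) $ Suc k
     = real (Suc n) * ((?p ^ Suc n) $ Suc k - (?p ^ n) $ Suc k - (?p ^ Suc n) $ k)"
    by simp
  show ?thesis using e l r by metis
qed

definition PP :: "nat \<Rightarrow> nat \<Rightarrow> real" where
  "PP n k = (\<Prod>j=1..k. 1 + (real n - 1) / (real j)^2)"

lemma PP_0 [simp]: "PP n 0 = 1" by (simp add: PP_def)

lemma PP_Suc: "PP n (Suc k) = PP n k * (1 + (real n - 1) / (real (Suc k))^2)"
  by (simp add: PP_def prod.cl_ivl_Suc)

lemma PP_nonneg: "PP (Suc n) k \<ge> 0"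
  unfolding PP_def by (rule prod_nonneg) auto

lemma PP_zero: "PP 0 (Suc k) = 0"
  unfolding PP_def by (rule prod_zero) (auto intro!: bexI[of _ 1])

lemma L_ineq:
  fixes n k :: nat
  shows "(real n+1)*((real k)^2+2*real k+real n) * PP n k \<le> real n*((real k)^2+real k+real n+1) * PP (Suc n) k"
proof (induction k)
  case 0 then show ?case by (simp add: algebra_simps)
next
  case (Suc k)
  define m where "m = real n"
  define y where "y = real k"
  define x where "x = real (Suc k)"
  have IH: "(m+1)*(y^2+2*y+m) * PP n k \<le> m*(y^2+y+m+1) * PP (Suc n) k"
    using Suc.IH unfolding y_def m_def .
  have x: "x = y + 1" using x_def y_def by simp
  define s where "s = (y+1)^2"
  have s0: "s > 0" unfolding s_def y_def by simp
  have m0: "m \<ge> 0" unfolding m_def by simp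
  have Y0: "PP (Suc n) k \<ge> 0" by (rule PP_nonneg)
  have e1: "PP n (Suc k) = PP n k * (y^2+2*y+m) / s"
    using s0 unfolding PP_Suc s_def y_def m_def by (simp add: field_simps power2_eq_square)
  have e2: "PP (Suc n) (Suc k) = PP (Suc n) k * (s+m) / s"
    using s0 unfolding PP_Suc s_def y_def m_def by (simp add: field_simps power2_eq_square)
  define a' where "a' = x^2+2*x+m"
  have a'0: "a' \<ge> 0" unfolding a'_def x using m0 y_def by simp
  have "(m+1)*a' * PP n (Suc k) = a' * ((m+1)*(y^2+2*y+m) * PP n k) / s"
    unfolding e1 by (simp add: field_simps)
  also have "\<dots> \<le> a' * (m*(y^2+y+m+1) * PP (Suc n) k) / s"
    using IH a'0 s0 by (intro divide_right_mono mult_left_mono) auto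
  also have "\<dots> \<le> (m*(x^2+x+m+1)) * (s+m) * PP (Suc n) k / s"
  proof -
    have p: "a' * (y^2+y+m+1) \<le> (x^2+x+m+1) * (s+m)"
    proof -
      have y0: "y \<ge> 0" unfolding y_def by simp
      have "(x^2+x+m+1) * (s+m) = a' * (y^2+y+m+1) + (2*y^2+2*y)"
        unfolding a'_def x s_def by (simp add: algebra_simps power2_eq_square)
      then show ?thesis using y0 by simp
    qed
    have "a' * (m*(y^2+y+m+1) * PP (Suc n) k) = (a' * (y^2+y+m+1)) * (m * PP (Suc n) k)"
      by (simp add: algebra_simps)
    also have "\<dots> \<le> ((x^2+x+m+1) * (s+m)) * (m * PP (Suc n) k)"
      using p m0 Y0 by (intro mult_right_mono) auto
    finally have "a' * (m*(y^2+y+m+1) * PP (Suc n) k) / s \<le> ((x^2+x+m+1) * (s+m)) * (m * PP (Suc n) k) / s"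
      using s0 by (intro divide_right_mono) auto
    then show ?thesis by (simp add: mult_ac)
  qed
  also have "\<dots> = m*(x^2+x+m+1) * PP (Suc n) (Suc k)"
    unfolding e2 by (simp add: mult_ac)
  finally show ?case unfolding a'_def x_def m_def .
qed

lemma key_ineq:
  fixes n K :: nat
  shows "PP n (Suc K) + (real (Suc n) + real K) / (real (Suc n) * real (Suc K)) * PP (Suc n) K
         \<le> PP (Suc n) (Suc K)"
proof -
  define m where "m = real n"
  define y where "y = real K"
  define s where "s = (y+1)^2"
  define X where "X = PP n K"
  define Y where "Y = PP (Suc n) K"
  define c where "c = (real (Suc n) + real K) / (real (Suc n) * real (Suc K))"
  define p where "p = PP n (Suc K)"
  define q where "q = PP (Suc n) (Suc K)"
  have s0: "s > 0" unfolding s_def y_def by simp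
  have m0: "m \<ge> 0" unfolding m_def by simp
  have L: "(m+1)*(y^2+2*y+m) * X \<le> m*(y^2+y+m+1) * Y"
    using L_ineq[of n K] unfolding m_def y_def X_def Y_def .
  have ps: "p * s = X * (y^2+2*y+m)"
  proof -
    have "p = X * (y^2+2*y+m) / s"
      using s0 unfolding p_def X_def PP_Suc s_def y_def m_def by (simp add: field_simps power2_eq_square)
    then show ?thesis using s0 by simp
  qed
  have qs: "q * s = Y * (s+m)"
  proof -
    have "q = Y * (s+m) / s"
      using s0 unfolding q_def Y_def PP_Suc s_def y_def m_def by (simp add: field_simps power2_eq_square)
    then show ?thesis using s0 by simp
  qed
  have cc: "c * ((m+1)*(y+1)) = m+y+1"
  proof -
    have d: "(m+1)*(y+1) \<noteq> 0" unfolding m_def y_def by (simp add: add_nonneg_eq_0_iff)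
    have "c = (m+y+1)/((m+1)*(y+1))" unfolding c_def m_def y_def by (simp add: algebra_simps)
    then show ?thesis using d by simp
  qed
  have "(p + c*Y) * ((m+1)*s) = (m+1)*(p*s) + (c*((m+1)*(y+1)))*((y+1)*Y)"
    by (simp add: s_def power2_eq_square algebra_simps)
  also have "\<dots> = (m+1)*(X * (y^2+2*y+m)) + (m+y+1)*((y+1)*Y)"
    unfolding ps cc ..
  also have "\<dots> \<le> m*(y^2+y+m+1) * Y + (m+y+1)*((y+1)*Y)"
    using L by (simp add: algebra_simps)
  also have "\<dots> = (m+1)*(Y*(s+m))"
    by (simp add: s_def power2_eq_square algebra_simps)
  also have "\<dots> = q * ((m+1)*s)"
    using qs by (simp add: algebra_simps)
  finally have "(p + c*Y) * ((m+1)*s) \<le> q * ((m+1)*s)" .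
  moreover have "(m+1)*s > 0" using s0 m0 by simp
  ultimately have "p + c*Y \<le> q" by (simp add: mult_le_cancel_right_pos)
  then show ?thesis unfolding p_def c_def Y_def q_def .
qed

lemma main_bound: "(phi_fps ^ n) $ k \<le> fact k * PP n k"
proof (induction n arbitrary: k)
  case 0
  then show ?case by (cases k) (simp_all add: PP_zero)
next
  case (Suc n)
  note IHn = Suc.IH
  show ?case
  proof (induction k)
    case 0
    then show ?case by (simp add: fps_power_zeroth phi_nth)
  next
    case (Suc K)
    define A where "A = (phi_fps ^ Suc n) $ K"
    define A' where "A' = (phi_fps ^ Suc n) $ Suc K"
    define B' where "B' = (phi_fps ^ n) $ Suc K"
    have r: "real K * A = real (Suc n) * (A' - B' - A)"
      using rec_a[of K n] unfolding A_def A'_def B'_def .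
    have eA': "A' = B' + (real (Suc n) + real K) / real (Suc n) * A"
      using r by (simp add: field_simps)
    have c0: "(real (Suc n) + real K) / real (Suc n) \<ge> 0" by simp
    have "A' \<le> fact (Suc K) * PP n (Suc K) + (real (Suc n) + real K) / real (Suc n) * (fact K * PP (Suc n) K)"
      unfolding eA' using IHn[of "Suc K"] Suc.IH c0 unfolding A_def B'_def
      by (intro add_mono mult_left_mono) auto
    also have "\<dots> = fact (Suc K) * (PP n (Suc K) + (real (Suc n) + real K) / (real (Suc n) * real (Suc K)) * PP (Suc n) K)"
    proof -
      define c where "c = real (Suc n) + real K"
      define N where "N = real (Suc n)"
      define d where "d = c / (N * real (Suc K))"
      have f: "fact (Suc K) = real (Suc K) * (fact K :: real)" by (simp add: fact_Suc del: of_nat_Suc)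
      have q: "real (Suc K) * d = c / N"
        unfolding d_def by (simp del: of_nat_Suc)
      have "fact (Suc K) * (PP n (Suc K) + d * PP (Suc n) K)
          = fact (Suc K) * PP n (Suc K) + (real (Suc K) * d) * (fact K * PP (Suc n) K)"
        unfolding f by (simp only: distrib_left mult_ac)
      then show ?thesis unfolding q c_def N_def d_def by simp
    qed
    also have "\<dots> \<le> fact (Suc K) * PP (Suc n) (Suc K)"
      by (intro mult_left_mono key_ineq) simp
    finally show ?case unfolding A'_def .
  qed
qed

lemma Q_bound: "(real k + 2) * (\<Prod>j=1..Suc k. 1 + 1 / (real j)^2) \<le> 4 * (real k + 1)"
proof (induction k)
  case 0 then show ?case by simp
next
  case (Suc k)
  define x where "x = real k"
  define Q where "Q = (\<Prod>j=1..Suc k. 1 + 1 / (real j)^2)"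
  define r where "r = 1 + 1/(x+2)^2"
  have x0: "x \<ge> 0" unfolding x_def by simp
  have Q0: "Q \<ge> 0" unfolding Q_def by (rule prod_nonneg) auto
  have IH: "(x+2) * Q \<le> 4*(x+1)" using Suc.IH unfolding x_def Q_def .
  have rr: "r * (x+2)^2 = (x+2)^2 + 1" unfolding r_def using x0 by (simp add: field_simps)
  have e: "(\<Prod>j=1..Suc (Suc k). 1 + 1 / (real j)^2) = Q * r"
    by (simp add: prod.cl_ivl_Suc x_def Q_def r_def add.commute)
  have p: "(x+1)*((x+2)^2+1)*(x+3) \<le> (x+2)^4"
    using x0 by (simp add: algebra_simps power2_eq_square power4_eq_xxxx)
  have "((x+3) * (Q*r)) * (x+2)^3 = ((x+2)*Q) * (r*(x+2)^2) * (x+3)"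
    by (simp add: power2_eq_square power3_eq_cube algebra_simps)
  also have "\<dots> \<le> (4*(x+1)) * ((x+2)^2+1) * (x+3)"
    unfolding rr using IH x0 by (intro mult_right_mono) auto
  also have "\<dots> = 4*((x+1)*((x+2)^2+1)*(x+3))" by (simp only: mult.assoc)
  also have "\<dots> \<le> 4*(x+2)^4" using p by simp
  also have "\<dots> = (4*(x+2)) * (x+2)^3" by (simp add: power4_eq_xxxx power3_eq_cube)
  finally have "((x+3) * (Q*r)) * (x+2)^3 \<le> (4*(x+2)) * (x+2)^3" .
  moreover have "(x+2)^3 > 0" using x0 by simp
  ultimately have "(x+3) * (Q*r) \<le> 4*(x+2)" by (simp add: mult_le_cancel_right_pos)
  then show ?case unfolding e x_def by (simp add: algebra_simps)
qed

lemma Q_bound4: "(\<Prod>j=1..k. 1 + 1 / (real j)^2) \<le> 4"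
proof (cases k)
  case 0 then show ?thesis by simp
next
  case (Suc k')
  define Q where "Q = (\<Prod>j=1..Suc k'. 1 + 1 / (real j)^2)"
  have "(real k' + 2) * Q \<le> 4 * (real k' + 1)"
    using Q_bound[of k'] unfolding Q_def .
  also have "\<dots> \<le> (real k' + 2) * 4" by simp
  finally have "(real k' + 2) * Q \<le> (real k' + 2) * 4" .
  then have "Q \<le> 4" using mult_le_cancel_left_pos[of "real k' + 2" Q 4] by simp
  then show ?thesis using Suc unfolding Q_def by simp
qed

lemma PP_bound:
  assumes "n \<ge> 1"
  shows "PP n k \<le> 6 ^ n"
proof -
  have "PP n k \<le> (\<Prod>j=1..k. (1 + 1 / (real j)^2) ^ (n-1))"
    unfolding PP_def
  proof (rule prod_mono)
    fix j assume "j \<in> {1..k}"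
    have "1 + real (n-1) * (1 / (real j)^2) \<le> (1 + 1 / (real j)^2) ^ (n-1)"
      by (rule Bernoulli_inequality) (rule order.trans[of _ 0], simp_all)
    moreover have e: "1 + (real n - 1) / (real j)^2 = 1 + real (n-1) * (1 / (real j)^2)"
      using assms by (simp add: of_nat_diff)
    moreover have "0 \<le> 1 + real (n-1) * (1 / (real j)^2)" by simp
    ultimately show "0 \<le> 1 + (real n - 1) / (real j)^2 \<and> 1 + (real n - 1) / (real j)^2 \<le> (1 + 1 / (real j)^2) ^ (n-1)"
      by (simp only: e)
  qed
  also have "\<dots> = (\<Prod>j=1..k. 1 + 1 / (real j)^2) ^ (n-1)"
    by (rule prod_power_distrib[symmetric])
  also have "\<dots> \<le> 4 ^ (n-1)"
    by (rule power_mono[OF Q_bound4], rule prod_nonneg) auto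
  also have "\<dots> \<le> 6 ^ (n-1)"
    by (rule power_mono) auto
  also have "\<dots> \<le> 6 ^ n"
    by (rule power_increasing) auto
  finally show ?thesis .
qed

theorem lemma5:
  fixes n k :: nat
  assumes "n \<ge> 1"
  shows "fps_nth (phi_fps ^ n) k \<le> fact k * (\<Prod>j=1..k. 1 + (real n - 1) / (real j)^2)
       \<and> fact k * (\<Prod>j=1..k. 1 + (real n - 1) / (real j)^2) \<le> 6 ^ n * fact k"
proof
  show "fps_nth (phi_fps ^ n) k \<le> fact k * (\<Prod>j=1..k. 1 + (real n - 1) / (real j)^2)"
    using main_bound[of n k] unfolding PP_def .
  show "fact k * (\<Prod>j=1..k. 1 + (real n - 1) / (real j)^2) \<le> 6 ^ n * fact k"
    using mult_left_mono[OF PP_bound[OF assms, of k], of "fact k"] unfolding PP_def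
    by (simp only: mult.commute[of "fact k" "6 ^ n"]) simp
qed

end
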